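(* Let $k \ge 2$ and let $n_1 < n_2 < \dots < n_k$ be positive integers. If the set $\{\rho_g(x) \mid x \in \langle n_1, \dots, n_k\rangle,\ x \neq 0\}$ has a limit point, then this limit point is $n_k/n_1$.
   Context: $\langle n_1,\dots,n_k\rangle$ is the additive submonoid of $\mathbb{N}$ generated by $n_1,\dots,n_k$. For nonzero $x\in\langle n_1,\dots,n_k\rangle$, the generalized set of lengths with respect to the distinguished generators $n_1,\dots,n_k$ is $\mathsf{L}_g(x)=\{c_1+\dots+c_k \mid c_1,\dots,c_k\in\mathbb{N},\ \sum_{i=1}^k c_i n_i = x\}$, and the generalized elasticity is $\rho_g(x)=\max \mathsf{L}_g(x)/\min\mathsf{L}_g(x)$. *)

theory Defs
  imports "HOL-Analysis.Analysis"
begin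

text \<open>Generators n_1 < ... < n_k are given as a list ns (index i corresponds to n_(i+1)).
  A factorization of x is a coefficient list c of the same length with
  sum_i c_i * n_i = x.\<close>

definition factorizations :: "nat list \<Rightarrow> nat \<Rightarrow> nat list set" where
  "factorizations ns x =
     {c. length c = length ns \<and> (\<Sum>i<length ns. c ! i * ns ! i) = x}"

definition num_monoid :: "nat list \<Rightarrow> nat set" where
  "num_monoid ns = {x. factorizations ns x \<noteq> {}}"

definition Lg :: "nat list \<Rightarrow> nat \<Rightarrow> nat set" where
  "Lg ns x = sum_list ` factorizations ns x"

definition rho_g :: "nat list \<Rightarrow> nat \<Rightarrow> real" where
  "rho_g ns x = real (Max (Lg ns x)) / real (Min (Lg ns x))"

end

theory Submission
  imports Defs
begin

lemma reduce:
  assumes c: "c \<in> factorizations ns x" and p: "p < length ns" and gp: "ns!p > 0"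
  shows "\<exists>c'\<in>factorizations ns x. \<forall>j<length ns. j\<noteq>p \<longrightarrow> c'!j < ns!p"
proof -
  define k where "k = length ns"
  define g where "g = ns!p"
  have g0: "g > 0" using gp g_def by simp
  have cl: "length c = k" and cx: "(\<Sum>i<k. c!i * ns!i) = x"
    using c by (auto simp: factorizations_def k_def)
  define f where "f j = (if j = p then c!p + (\<Sum>i\<in>{..<k}-{p}. (c!i div g) * ns!i) else c!j mod g)" for j
  define c' where "c' = map f [0..<k]"
  have len: "length c' = k" by (simp add: c'_def)
  have nth: "j<k \<Longrightarrow> c'!j = f j" for j by (simp add: c'_def)
  have pk: "p \<in> {..<k}" using p k_def by simp
  have "(\<Sum>i<k. c'!i * ns!i) = (\<Sum>i<k. f i * ns!i)"
    by (rule sum.cong) (auto simp: nth)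
  also have "\<dots> = f p * g + (\<Sum>i\<in>{..<k}-{p}. f i * ns!i)"
    using sum.remove[OF _ pk, of "\<lambda>i. f i * ns!i"] by (simp add: g_def)
  also have "(\<Sum>i\<in>{..<k}-{p}. f i * ns!i) = (\<Sum>i\<in>{..<k}-{p}. (c!i mod g) * ns!i)"
    by (rule sum.cong) (auto simp: f_def)
  also have "f p * g = c!p*g + (\<Sum>i\<in>{..<k}-{p}. (c!i div g) * g * ns!i)"
    by (simp add: f_def algebra_simps sum_distrib_left sum_distrib_right)
  also have "c!p*g + (\<Sum>i\<in>{..<k}-{p}. (c!i div g) * g * ns!i) + (\<Sum>i\<in>{..<k}-{p}. (c!i mod g) * ns!i)
      = c!p*g + (\<Sum>i\<in>{..<k}-{p}. c!i * ns!i)"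
  proof -
    have "(\<Sum>i\<in>{..<k}-{p}. (c!i div g) * g * ns!i) + (\<Sum>i\<in>{..<k}-{p}. (c!i mod g) * ns!i)
        = (\<Sum>i\<in>{..<k}-{p}. ((c!i div g) * g + c!i mod g) * ns!i)"
      by (simp only: sum.distrib[symmetric] distrib_right)
    also have "\<dots> = (\<Sum>i\<in>{..<k}-{p}. c!i * ns!i)"
      by (simp only: div_mult_mod_eq)
    finally show ?thesis by simp
  qed
  also have "\<dots> = (\<Sum>i<k. c!i * ns!i)"
    using sum.remove[OF _ pk, of "\<lambda>i. c!i * ns!i"] by (simp add: g_def)
  finally have "(\<Sum>i<k. c'!i * ns!i) = x" using cx by simp
  hence "c' \<in> factorizations ns x" using len by (simp add: factorizations_def k_def)
  moreover have "\<forall>j<length ns. j\<noteq>p \<longrightarrow> c'!j < ns!p"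
    using nth g0 by (auto simp: f_def g_def k_def)
  ultimately show ?thesis by blast
qed


lemma bounds:
  assumes len: "length ns \<ge> 1"
    and mle: "\<forall>i<length ns. hd ns \<le> ns!i \<and> ns!i \<le> last ns"
    and pos: "hd ns > 0"
    and xm: "x \<in> num_monoid ns"
  shows "finite (Lg ns x)" "Lg ns x \<noteq> {}"
    "\<forall>l\<in>Lg ns x. hd ns * l \<le> x \<and> x \<le> last ns * l"
    "\<exists>l\<in>Lg ns x. x \<le> hd ns * l + length ns * hd ns * last ns"
    "\<exists>l\<in>Lg ns x. last ns * l \<le> x + length ns * last ns * last ns"
proof -
  define k where "k = length ns"
  define m where "m = hd ns"
  define M where "M = last ns"
  have m0: "m = ns!0" using len by (cases ns) (auto simp: m_def)
  have M0: "M = ns!(k-1)" using len unfolding M_def k_def by (intro last_conv_nth) auto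
  have bnd: "i<k \<Longrightarrow> m \<le> ns!i \<and> ns!i \<le> M" for i using mle by (simp add: k_def m_def M_def)
  have sl: "c \<in> factorizations ns x \<Longrightarrow> sum_list c = (\<Sum>i<k. c!i)" for c
    by (simp add: sum_list_sum_nth factorizations_def k_def lessThan_atLeast0)
  have fx: "c \<in> factorizations ns x \<Longrightarrow> (\<Sum>i<k. c!i * ns!i) = x" for c
    by (simp add: factorizations_def k_def)
  have A: "m * l \<le> x \<and> x \<le> M * l" if hl: "l \<in> Lg ns x" for l
  proof -
    obtain c where c: "c \<in> factorizations ns x" and l: "l = sum_list c"
      using hl unfolding Lg_def by blast
    have "m * l = (\<Sum>i<k. c!i * m)" by (simp add: l sl[OF c] sum_distrib_left mult.commute)
    also have "\<dots> \<le> (\<Sum>i<k. c!i * ns!i)" by (rule sum_mono) (simp add: bnd)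
    finally have 1: "m*l \<le> x" using fx[OF c] by simp
    have "x = (\<Sum>i<k. c!i * ns!i)" using fx[OF c] by simp
    also have "\<dots> \<le> (\<Sum>i<k. c!i * M)" by (rule sum_mono) (simp add: bnd)
    also have "\<dots> = M * l" by (simp add: l sl[OF c] sum_distrib_left mult.commute)
    finally show ?thesis using 1 by simp
  qed
  thus "\<forall>l\<in>Lg ns x. hd ns * l \<le> x \<and> x \<le> last ns * l" by (simp add: m_def M_def)
  have "Lg ns x \<subseteq> {..x}"
  proof
    fix l assume "l \<in> Lg ns x"
    with A have "m*l \<le> x" by blast
    moreover have "l \<le> m * l" using pos m_def by simp
    ultimately show "l \<in> {..x}" using le_trans unfolding atMost_iff by blast
  qed
  thus "finite (Lg ns x)" using finite_subset by blast
  obtain c where c: "c \<in> factorizations ns x" using xm by (auto simp: num_monoid_def)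
  thus "Lg ns x \<noteq> {}" by (auto simp: Lg_def)
  have k0: "0 < k" using len unfolding k_def by linarith
  obtain c1 where c1: "c1 \<in> factorizations ns x" and c1s: "\<forall>j<k. j\<noteq>0 \<longrightarrow> c1!j < m"
    using reduce[OF c, of 0] k0 pos m0 m_def unfolding k_def by auto
  have e1: "x = c1!0 * m + (\<Sum>i\<in>{..<k}-{0}. c1!i * ns!i)"
    using fx[OF c1] sum.remove[of "{..<k}" 0 "\<lambda>i. c1!i * ns!i"] k0 m0 by simp
  have e2: "(\<Sum>i\<in>{..<k}-{0}. c1!i * ns!i) \<le> (\<Sum>i\<in>{..<k}-{0}. m * M)"
    by (rule sum_mono) (use c1s bnd in \<open>auto intro!: mult_mono\<close>)
  have e3: "(\<Sum>i\<in>{..<k}-{0}. m * M) \<le> k * m * M" using card_Diff1_le[of "{..<k}" 0] by simp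
  have x1: "x \<le> c1!0 * m + k*m*M" using e1 e2 e3 by linarith
  have "c1!0 \<le> sum_list c1" using sl[OF c1] k0
    by (simp add: member_le_sum)
  hence "c1!0 * m \<le> m * sum_list c1" by (simp add: mult.commute)
  with x1 have "x \<le> m * sum_list c1 + k*m*M" by linarith
  moreover have "sum_list c1 \<in> Lg ns x" using c1 by (simp add: Lg_def)
  ultimately show "\<exists>l\<in>Lg ns x. x \<le> hd ns * l + length ns * hd ns * last ns"
    by (auto simp: m_def M_def k_def)
  define q where "q = k - 1"
  have q: "q < k" "q \<in> {..<k}" using k0 by (auto simp: q_def)
  obtain c2 where c2: "c2 \<in> factorizations ns x" and c2s: "\<forall>j<k. j\<noteq>q \<longrightarrow> c2!j < M"
  proof -
    have "ns!q > 0" using bnd[of q] q pos m_def by simp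
    then show ?thesis using reduce[OF c, of q] q M0 that unfolding k_def q_def by auto
  qed
  have f1: "sum_list c2 = c2!q + (\<Sum>i\<in>{..<k}-{q}. c2!i)"
    using sl[OF c2] sum.remove[of "{..<k}" q "\<lambda>i. c2!i"] q by simp
  have f2: "(\<Sum>i\<in>{..<k}-{q}. c2!i) \<le> (\<Sum>i\<in>{..<k}-{q}. M)"
    by (rule sum_mono) (use c2s in \<open>auto intro: less_imp_le\<close>)
  have f3: "(\<Sum>i\<in>{..<k}-{q}. M) \<le> k * M" using card_Diff1_le[of "{..<k}" q] by simp
  have "sum_list c2 \<le> c2!q + k * M" using f1 f2 f3 by linarith
  hence s2: "M * sum_list c2 \<le> M * c2!q + k*M*M"
    by (metis add_mult_distrib2 mult.assoc mult.commute mult_le_mono2)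
  have "c2!q * ns!q \<le> (\<Sum>i<k. c2!i * ns!i)"
    using q by (intro member_le_sum) auto
  hence "M * c2!q \<le> x" using fx[OF c2] M0 q_def by (simp add: mult.commute)
  with s2 have "M * sum_list c2 \<le> x + k*M*M" by simp
  moreover have "sum_list c2 \<in> Lg ns x" using c2 by (simp add: Lg_def)
  ultimately show "\<exists>l\<in>Lg ns x. last ns * l \<le> x + length ns * last ns * last ns"
    by (auto simp: m_def M_def k_def)
qed


lemma realb:
  fixes a b X P Q D E :: real
  assumes a: "a > 0" and X: "X > 0" and Q: "Q > 0"
    and h1: "a*P \<le> X" "X \<le> b*Q" "X \<le> a*P + D" "b*Q \<le> X + E"
  shows "\<bar>P/Q - b/a\<bar> \<le> (D+E)*b/a / X"
proof -
  have up: "P/Q \<le> b/a" using a Q h1 by (simp add: divide_simps mult.commute)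
  have "b/a - P/Q = (b*Q - a*P)/(a*Q)" using a Q by (simp add: field_simps)
  also have "\<dots> \<le> (D+E)/(a*Q)" using a Q h1 by (intro divide_right_mono) auto
  also have "\<dots> = (D+E)/a * (1/Q)" by simp
  also have "\<dots> \<le> (D+E)/a * (b/X)"
  proof (rule mult_left_mono)
    show "1/Q \<le> b/X" using X Q h1 by (simp add: divide_simps mult.commute)
    show "0 \<le> (D+E)/a" using h1 a by (simp add: divide_simps)
  qed
  also have "\<dots> = (D+E)*b/a / X" by simp
  finally show ?thesis using up by linarith
qed

lemma rho_bound:
  assumes len: "length ns \<ge> 1"
    and mle: "\<forall>i<length ns. hd ns \<le> ns!i \<and> ns!i \<le> last ns"
    and pos: "hd ns > 0"
    and xm: "x \<in> num_monoid ns" and x0: "x > 0"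
  shows "\<bar>rho_g ns x - real (last ns) / real (hd ns)\<bar> \<le>
    (real (length ns * hd ns * last ns) + real (length ns * last ns * last ns)) * real (last ns) / real (hd ns) / real x"
proof -
  note B = bounds[OF len mle pos xm]
  define P where "P = Max (Lg ns x)"
  define Q where "Q = Min (Lg ns x)"
  have Pin: "P \<in> Lg ns x" using B(1,2) P_def by simp
  have Qin: "Q \<in> Lg ns x" using B(1,2) Q_def by simp
  have h1: "hd ns * P \<le> x" using B(3) Pin by blast
  have h2: "x \<le> last ns * Q" using B(3) Qin by blast
  obtain l1 where l1: "l1 \<in> Lg ns x" "x \<le> hd ns * l1 + length ns * hd ns * last ns" using B(4) by blast
  have "l1 \<le> P" using B(1) l1 P_def by simp
  hence h3: "x \<le> hd ns * P + length ns * hd ns * last ns" using l1 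
    by (meson add_le_mono1 le_trans mult_le_mono2)
  obtain l2 where l2: "l2 \<in> Lg ns x" "last ns * l2 \<le> x + length ns * last ns * last ns" using B(5) by blast
  have "Q \<le> l2" using B(1) l2 Q_def by simp
  hence h4: "last ns * Q \<le> x + length ns * last ns * last ns" using l2
    by (meson le_trans mult_le_mono2)
  have Q0: "Q > 0" using h2 x0 by (metis gr0I mult_0_right not_le)
  have rh: "rho_g ns x = real P / real Q" by (simp add: rho_g_def P_def Q_def)
  show ?thesis unfolding rh
    apply (rule realb)
    using pos x0 Q0 h1 h2 h3 h4 by (simp_all add: of_nat_mult[symmetric] of_nat_add[symmetric] del: of_nat_mult of_nat_add)
qed

theorem lemma5p3:
  fixes ns :: "nat list" and L :: real
  assumes "length ns \<ge> 2"
    and "sorted_wrt (<) ns"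
    and "\<forall>n\<in>set ns. n > 0"
    and "L islimpt {rho_g ns x | x. x \<in> num_monoid ns \<and> x \<noteq> 0}"
  shows "L = real (last ns) / real (hd ns)"
proof (rule ccontr)
  assume ne: "L \<noteq> real (last ns) / real (hd ns)"
  define k where "k = length ns"
  have len: "length ns \<ge> 1" using assms(1) by simp
  have ne0: "ns \<noteq> []" using assms(1) by auto
  have hd0: "hd ns = ns!0" using ne0 by (cases ns) auto
  have last0: "last ns = ns!(k-1)" unfolding k_def using ne0 by (intro last_conv_nth)
  have srt: "\<And>i j. i < j \<Longrightarrow> j < k \<Longrightarrow> ns!i < ns!j"
    using assms(2) unfolding sorted_wrt_iff_nth_less k_def by blast
  have mle: "\<forall>i<length ns. hd ns \<le> ns!i \<and> ns!i \<le> last ns"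
  proof (intro allI impI)
    fix i assume i: "i < length ns"
    have "ns!0 \<le> ns!i" using srt[of 0 i] i k_def by (cases "i = 0") auto
    moreover have "ns!i \<le> ns!(k-1)" using srt[of i "k-1"] i k_def by (cases "i = k-1") (auto simp: less_imp_le)
    ultimately show "hd ns \<le> ns!i \<and> ns!i \<le> last ns" using hd0 last0 by simp
  qed
  have pos: "hd ns > 0" using assms(3) ne0 by simp
  define c where "c = real (last ns) / real (hd ns)"
  define C where "C = (real (length ns * hd ns * last ns) + real (length ns * last ns * last ns)) * real (last ns) / real (hd ns)"
  have C0: "C \<ge> 0" unfolding C_def by simp
  define e where "e = \<bar>L - c\<bar> / 2"
  have e0: "e > 0" using ne unfolding e_def c_def by simp
  define N where "N = nat \<lceil>C / e\<rceil>"
  have sub: "{rho_g ns x | x. x \<in> num_monoid ns \<and> x \<noteq> 0} \<subseteq> rho_g ns ` {..N} \<union> cball c e"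
  proof
    fix y assume "y \<in> {rho_g ns x | x. x \<in> num_monoid ns \<and> x \<noteq> 0}"
    then obtain x where x: "x \<in> num_monoid ns" "x \<noteq> 0" and y: "y = rho_g ns x" by blast
    show "y \<in> rho_g ns ` {..N} \<union> cball c e"
    proof (cases "x \<le> N")
      case True thus ?thesis using y by auto
    next
      case False
      hence "real x > C / e" unfolding N_def by linarith
      hence "C < e * real x" using e0 by (simp add: divide_simps mult.commute)
      hence ce: "C / real x \<le> e" using False by (simp add: divide_simps)
      have "\<bar>y - c\<bar> \<le> C / real x" using rho_bound[OF len mle pos x(1)] x(2) y
        unfolding C_def c_def by simp
      hence "dist c y \<le> e" using ce by (simp add: dist_real_def abs_minus_commute)
      thus ?thesis by simp
    qed
  qed
  have "L islimpt (rho_g ns ` {..N} \<union> cball c e)" using islimpt_subset[OF assms(4) sub] .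
  hence "L islimpt cball c e" using islimpt_finite[of "rho_g ns ` {..N}"] islimpt_Un by blast
  hence "L \<in> cball c e" using closed_limpt[of "cball c e"] by blast
  hence "\<bar>L - c\<bar> \<le> e" by (simp add: dist_real_def abs_minus_commute)
  thus False using e0 unfolding e_def by simp
qed

end
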